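(* Two tuples $(f_1,\dots,f_n),(g_1,\dots,g_n)\in M_{[0,1]}^n$ have the same type (over $\emptyset$) if and only if $\mathrm{im}(f_1,\dots,f_n)=\mathrm{im}(g_1,\dots,g_n)$.
   Context: $M_{[0,1]}$ is the set of continuous nondecreasing functions $f:[0,1]\to[0,1]$ with $f(0)=0$, $f(1)=1$, with the sup metric, regarded as a metric structure in the language of binary predicates $\varphi_\alpha$ ($\alpha\in\mathbb{Q}\cap[0,1]$), where $\varphi_\alpha(f,g)=f(t)$ for any $t$ with $f(t)+g(t)=\alpha$ (independent of the choice of $t$); this structure is interdefinable with Ben Yaacov's structure whose automorphism group is $\mathrm{Hom}^+([0,1])$, acting by $g\mapsto g\circ h^{-1}$. $\mathrm{im}(f_1,\dots,f_n)=\{(f_1(t),\dots,f_n(t)):t\in[0,1]\}\subseteq[0,1]^n$. *)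

theory Defs
  imports "HOL-Analysis.Analysis"
begin

text \<open>The underlying set of M_[0,1]: continuous nondecreasing self-maps of [0,1]
  fixing 0 and 1 (represented as real functions; only values on [0,1] matter).\<close>
definition Mset :: "(real \<Rightarrow> real) set" where
  "Mset = {f. continuous_on {0..1} f \<and> mono_on {0..1} f \<and> f 0 = 0 \<and> f 1 = 1
              \<and> f ` {0..1} \<subseteq> {0..1}}"

definition supdist :: "(real \<Rightarrow> real) \<Rightarrow> (real \<Rightarrow> real) \<Rightarrow> real" where
  "supdist f g = Sup ((\<lambda>t. \<bar>f t - g t\<bar>) ` {0..1})"

definition phi :: "real \<Rightarrow> (real \<Rightarrow> real) \<Rightarrow> (real \<Rightarrow> real) \<Rightarrow> real" where
  "phi \<alpha> f g = f (SOME t. t \<in> {0..1} \<and> f t + g t = \<alpha>)"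

text \<open>Continuous-logic formulas in the language {d} \<union> {phi_alpha : alpha \<in> Q \<inter> [0,1]},
  built with the (uniformly dense) system of connectives 1, 1-x, x/2, truncated subtraction,
  and the quantifiers sup and inf.\<close>
datatype form =
    Dist nat nat
  | Phi rat nat nat
  | One
  | Neg form
  | Half form
  | Minus form form
  | SupQ nat form
  | InfQ nat form

fun fv :: "form \<Rightarrow> nat set" where
  "fv (Dist i j) = {i, j}"
| "fv (Phi a i j) = {i, j}"
| "fv One = {}"
| "fv (Neg p) = fv p"
| "fv (Half p) = fv p"
| "fv (Minus p q) = fv p \<union> fv q"
| "fv (SupQ i p) = fv p - {i}"
| "fv (InfQ i p) = fv p - {i}"

fun in_lang :: "form \<Rightarrow> bool" where
  "in_lang (Dist i j) = True"
| "in_lang (Phi a i j) = (0 \<le> a \<and> a \<le> 1)"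
| "in_lang One = True"
| "in_lang (Neg p) = in_lang p"
| "in_lang (Half p) = in_lang p"
| "in_lang (Minus p q) = (in_lang p \<and> in_lang q)"
| "in_lang (SupQ i p) = in_lang p"
| "in_lang (InfQ i p) = in_lang p"

fun eval :: "(nat \<Rightarrow> real \<Rightarrow> real) \<Rightarrow> form \<Rightarrow> real" where
  "eval \<sigma> (Dist i j) = supdist (\<sigma> i) (\<sigma> j)"
| "eval \<sigma> (Phi a i j) = phi (of_rat a) (\<sigma> i) (\<sigma> j)"
| "eval \<sigma> One = 1"
| "eval \<sigma> (Neg p) = 1 - eval \<sigma> p"
| "eval \<sigma> (Half p) = eval \<sigma> p / 2"
| "eval \<sigma> (Minus p q) = max (eval \<sigma> p - eval \<sigma> q) 0"
| "eval \<sigma> (SupQ i p) = Sup ((\<lambda>h. eval (\<sigma>(i := h)) p) ` Mset)"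
| "eval \<sigma> (InfQ i p) = Inf ((\<lambda>h. eval (\<sigma>(i := h)) p) ` Mset)"

definition asg :: "(real \<Rightarrow> real) list \<Rightarrow> nat \<Rightarrow> real \<Rightarrow> real" where
  "asg fs i = (if i < length fs then fs ! i else id)"

definition same_type :: "(real \<Rightarrow> real) list \<Rightarrow> (real \<Rightarrow> real) list \<Rightarrow> bool" where
  "same_type fs gs \<longleftrightarrow> length fs = length gs \<and>
     (\<forall>p. in_lang p \<and> fv p \<subseteq> {..<length fs} \<longrightarrow> eval (asg fs) p = eval (asg gs) p)"

definition im :: "(real \<Rightarrow> real) list \<Rightarrow> real list set" where
  "im fs = (\<lambda>t. map (\<lambda>f. f t) fs) ` {0..1}"

end

theory Submission
  imports Defs
begin

lemma id_Mset: "id \<in> Mset"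
  unfolding Mset_def by (auto intro: continuous_on_id mono_onI)

lemma MsetD:
  assumes "f \<in> Mset"
  shows "continuous_on {0..1} f" "mono_on {0..1} f" "f 0 = 0" "f 1 = 1"
    "\<And>t. t \<in> {0..1} \<Longrightarrow> 0 \<le> f t" "\<And>t. t \<in> {0..1} \<Longrightarrow> f t \<le> 1"
  using assms unfolding Mset_def image_subset_iff by auto

lemma Mset_mono: "f \<in> Mset \<Longrightarrow> x \<in> {0..1} \<Longrightarrow> y \<in> {0..1} \<Longrightarrow> x \<le> y \<Longrightarrow> f x \<le> f y"
  using MsetD(2) mono_onD by blast

lemma Mset_cong:
  assumes "f \<in> Mset" "\<And>t. t \<in> {0..1} \<Longrightarrow> g t = f t"
  shows "g \<in> Mset"
proof -
  have "continuous_on {0..1} g" using continuous_on_cong[of "{0..1}" "{0..1}" g f] MsetD(1)[OF assms(1)] assms(2) by auto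
  moreover have "mono_on {0..1} g" using assms by (auto intro!: mono_onI simp: Mset_mono)
  moreover have "g 0 = 0" "g 1 = 1" using assms MsetD[OF assms(1)] by auto
  moreover have "g ` {0..1} \<subseteq> {0..1}" using assms MsetD[OF assms(1)] by auto
  ultimately show ?thesis unfolding Mset_def image_subset_iff by auto
qed

lemma Mset_comp:
  assumes "f \<in> Mset" "continuous_on {0..1} k" "mono_on {0..1} k" "k ` {0..1} \<subseteq> {0..1}" "k 0 = 0" "k 1 = 1"
  shows "(\<lambda>t. f (k t)) \<in> Mset"
proof -
  have "continuous_on {0..1} (\<lambda>t. f (k t))"
    using continuous_on_compose2[OF MsetD(1)[OF assms(1)] assms(2) assms(4)] .
  moreover have "mono_on {0..1} (\<lambda>t. f (k t))"
    using assms(3,4) by (auto intro!: mono_onI Mset_mono[OF assms(1)] dest: mono_onD)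
  moreover have "(\<lambda>t. f (k t)) ` {0..1} \<subseteq> {0..1}"
  proof
    fix x assume "x \<in> (\<lambda>t. f (k t)) ` {0..1}"
    then obtain t where "t \<in> {0..1}" "x = f (k t)" by auto
    then have "k t \<in> {0..1}" using assms(4) by blast
    then show "x \<in> {0..1}" using MsetD(5,6)[OF assms(1)] \<open>x = f (k t)\<close> by auto
  qed
  ultimately show ?thesis using assms MsetD[OF assms(1)] unfolding Mset_def image_subset_iff by auto
qed

lemma cross_ex:
  assumes "f \<in> Mset" "g \<in> Mset" "0 \<le> a" "a \<le> 2"
  shows "\<exists>t\<in>{0..1}. f t + g t = a"
proof -
  have c: "continuous_on {0..1} (\<lambda>t. f t + g t)"
    using MsetD(1)[OF assms(1)] MsetD(1)[OF assms(2)] by (intro continuous_intros)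
  have "f 0 + g 0 \<le> a" "a \<le> f 1 + g 1" using MsetD[OF assms(1)] MsetD[OF assms(2)] assms by auto
  from IVT'[of "\<lambda>t. f t + g t", OF this _ c] show ?thesis by auto
qed

lemma phi_eq:
  assumes "f \<in> Mset" "g \<in> Mset" "t \<in> {0..1}" "f t + g t = a"
  shows "phi a f g = f t"
proof -
  let ?s = "SOME t. t \<in> {0..1} \<and> f t + g t = a"
  have s: "?s \<in> {0..1} \<and> f ?s + g ?s = a" by (rule someI[of _ t]) (use assms in auto)
  have "f ?s = f t"
  proof (cases "?s \<le> t")
    case True
    then have "f ?s \<le> f t" "g ?s \<le> g t" using s assms Mset_mono by auto
    then show ?thesis using s assms by linarith
  next
    case False
    then have "f t \<le> f ?s" "g t \<le> g ?s" using s assms Mset_mono by auto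
    then show ?thesis using s assms by linarith
  qed
  then show ?thesis unfolding phi_def by simp
qed

lemma phi_range:
  assumes "f \<in> Mset" "g \<in> Mset" "0 \<le> a" "a \<le> 2"
  shows "0 \<le> phi a f g" "phi a f g \<le> 1"
proof -
  obtain t where t: "t \<in> {0..1}" "f t + g t = a" using cross_ex[OF assms] by blast
  show "0 \<le> phi a f g" "phi a f g \<le> 1" unfolding phi_eq[OF assms(1,2) t] using MsetD(5,6)[OF assms(1) t(1)] by auto
qed


lemma rat_bounds: "0 \<le> a \<Longrightarrow> a \<le> 1 \<Longrightarrow> 0 \<le> (of_rat a::real) \<and> (of_rat a::real) \<le> 1"
proof -
  assume "0 \<le> a" "a \<le> 1"
  then have "(of_rat a::real) \<le> of_rat 1" "(0::real) \<le> of_rat a" using of_rat_less_eq by (metis of_rat_0)+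
  then show ?thesis by simp
qed

lemma Mset_ne: "Mset \<noteq> {}" using id_Mset by auto

lemma Mset_absdiff: "f \<in> Mset \<Longrightarrow> g \<in> Mset \<Longrightarrow> t \<in> {0..1} \<Longrightarrow> \<bar>f t - g t\<bar> \<le> 1"
proof -
  assume a: "f \<in> Mset" "g \<in> Mset" "t \<in> {0..1}"
  have "0 \<le> f t" "f t \<le> 1" "0 \<le> g t" "g t \<le> 1" using MsetD(5,6)[OF a(1) a(3)] MsetD(5,6)[OF a(2) a(3)] by auto
  then show ?thesis by (simp add: abs_le_iff)
qed

lemma supdist_range:
  assumes "f \<in> Mset" "g \<in> Mset"
  shows "0 \<le> supdist f g" "supdist f g \<le> 1"
proof -
  have b: "\<And>t. t \<in> {0..1} \<Longrightarrow> \<bar>f t - g t\<bar> \<le> 1"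
    using Mset_absdiff assms by blast
  have bdd: "bdd_above ((\<lambda>t. \<bar>f t - g t\<bar>) ` {0..1})" by (rule bdd_aboveI2[where M=1]) (rule b)
  have "0 \<le> \<bar>f 0 - g 0\<bar>" by simp
  also have "\<dots> \<le> supdist f g" unfolding supdist_def by (rule cSUP_upper[OF _ bdd]) auto
  finally show "0 \<le> supdist f g" .
  show "supdist f g \<le> 1" unfolding supdist_def by (rule cSUP_least) (use b in auto)
qed

lemma eval_range:
  "in_lang p \<Longrightarrow> (\<forall>i\<in>fv p. \<sigma> i \<in> Mset) \<Longrightarrow> 0 \<le> eval \<sigma> p \<and> eval \<sigma> p \<le> 1"
proof (induction p arbitrary: \<sigma>)
  case (Dist i j)
  then show ?case using supdist_range[of "\<sigma> i" "\<sigma> j"] by simp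
next
  case (Phi a i j)
  have rb1: "0 \<le> (of_rat a::real)" and rb2: "(of_rat a::real) \<le> 1" using rat_bounds[of a] Phi by auto
  then have "0 \<le> (of_rat a::real)" "(of_rat a::real) \<le> 2" by linarith+
  then show ?case using Phi phi_range[of "\<sigma> i" "\<sigma> j" "of_rat a"] by simp
next
  case (Half p)
  then have "0 \<le> eval \<sigma> p \<and> eval \<sigma> p \<le> 1" by simp
  then show ?case by simp
next
  case (Minus p q)
  then have "0 \<le> eval \<sigma> p \<and> eval \<sigma> p \<le> 1" "0 \<le> eval \<sigma> q \<and> eval \<sigma> q \<le> 1" by simp_all
  then show ?case by simp
next
  case (SupQ i p)
  have h: "\<And>h. h \<in> Mset \<Longrightarrow> 0 \<le> eval (\<sigma>(i:=h)) p \<and> eval (\<sigma>(i:=h)) p \<le> 1"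
    using SupQ by auto
  have "0 \<le> eval (\<sigma>(i:=id)) p" using h id_Mset by auto
  also have "\<dots> \<le> Sup ((\<lambda>h. eval (\<sigma>(i := h)) p) ` Mset)"
    by (rule cSUP_upper[OF id_Mset], rule bdd_aboveI2[where M=1]) (use h in auto)
  finally show ?case using h by (auto intro!: cSUP_least simp: Mset_ne)
next
  case (InfQ i p)
  have h: "\<And>h. h \<in> Mset \<Longrightarrow> 0 \<le> eval (\<sigma>(i:=h)) p \<and> eval (\<sigma>(i:=h)) p \<le> 1"
    using InfQ by auto
  have "Inf ((\<lambda>h. eval (\<sigma>(i := h)) p) ` Mset) \<le> eval (\<sigma>(i:=id)) p"
    by (rule cINF_lower[OF bdd_belowI2[where m=0] id_Mset]) (use h in auto)
  also have "\<dots> \<le> 1" using h id_Mset by auto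
  finally show ?case using h by (auto intro!: cINF_greatest simp: Mset_ne)
qed auto

lemma sup_diff:
  fixes A B :: "'a \<Rightarrow> real"
  assumes "S \<noteq> {}" "\<And>h. h \<in> S \<Longrightarrow> 0 \<le> A h \<and> A h \<le> 1" "\<And>h. h \<in> S \<Longrightarrow> 0 \<le> B h \<and> B h \<le> 1"
    "\<And>h. h \<in> S \<Longrightarrow> \<bar>A h - B h\<bar> \<le> c"
  shows "\<bar>Sup (A ` S) - Sup (B ` S)\<bar> \<le> c"
proof -
  have bA: "bdd_above (A ` S)" by (rule bdd_aboveI2[where M=1]) (use assms(2) in auto)
  have bB: "bdd_above (B ` S)" by (rule bdd_aboveI2[where M=1]) (use assms(3) in auto)
  have 1: "Sup (A ` S) \<le> Sup (B ` S) + c"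
  proof (rule cSUP_least[OF assms(1)])
    fix h assume "h \<in> S"
    then have "\<bar>A h - B h\<bar> \<le> c" "B h \<le> Sup (B ` S)" using assms(4) cSUP_upper[OF _ bB] by auto
    then show "A h \<le> Sup (B ` S) + c" by (simp add: abs_le_iff)
  qed
  have 2: "Sup (B ` S) \<le> Sup (A ` S) + c"
  proof (rule cSUP_least[OF assms(1)])
    fix h assume "h \<in> S"
    then have "\<bar>A h - B h\<bar> \<le> c" "A h \<le> Sup (A ` S)" using assms(4) cSUP_upper[OF _ bA] by auto
    then show "B h \<le> Sup (A ` S) + c" by (simp add: abs_le_iff)
  qed
  from 1 2 show ?thesis by linarith
qed

lemma inf_diff:
  fixes A B :: "'a \<Rightarrow> real"
  assumes "S \<noteq> {}" "\<And>h. h \<in> S \<Longrightarrow> 0 \<le> A h \<and> A h \<le> 1" "\<And>h. h \<in> S \<Longrightarrow> 0 \<le> B h \<and> B h \<le> 1"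
    "\<And>h. h \<in> S \<Longrightarrow> \<bar>A h - B h\<bar> \<le> c"
  shows "\<bar>Inf (A ` S) - Inf (B ` S)\<bar> \<le> c"
proof -
  have bA: "bdd_below (A ` S)" by (rule bdd_belowI2[where m=0]) (use assms(2) in auto)
  have bB: "bdd_below (B ` S)" by (rule bdd_belowI2[where m=0]) (use assms(3) in auto)
  have 1: "Inf (A ` S) - c \<le> Inf (B ` S)"
  proof (rule cINF_greatest[OF assms(1)])
    fix h assume "h \<in> S"
    then have "\<bar>A h - B h\<bar> \<le> c" "Inf (A ` S) \<le> A h" using assms(4) cINF_lower[OF bA] by auto
    then show "Inf (A ` S) - c \<le> B h" by (simp add: abs_le_iff)
  qed
  have 2: "Inf (B ` S) - c \<le> Inf (A ` S)"
  proof (rule cINF_greatest[OF assms(1)])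
    fix h assume "h \<in> S"
    then have "\<bar>A h - B h\<bar> \<le> c" "Inf (B ` S) \<le> B h" using assms(4) cINF_lower[OF bB] by auto
    then show "Inf (B ` S) - c \<le> A h" by (simp add: abs_le_iff)
  qed
  from 1 2 show ?thesis by linarith
qed

fun L :: "form \<Rightarrow> real" where
  "L (Dist i j) = 2"
| "L (Phi a i j) = 3"
| "L One = 0"
| "L (Neg p) = L p"
| "L (Half p) = L p"
| "L (Minus p q) = L p + L q"
| "L (SupQ i p) = L p"
| "L (InfQ i p) = L p"

lemma L_nonneg: "0 \<le> L p" by (induction p) auto

definition close :: "real \<Rightarrow> (real \<Rightarrow> real) \<Rightarrow> (real \<Rightarrow> real) \<Rightarrow> bool" where
  "close e f g \<longleftrightarrow> (\<forall>t\<in>{0..1}. \<bar>f t - g t\<bar> \<le> e)"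

lemma supdist_lip:
  assumes "f \<in> Mset" "g \<in> Mset" "f' \<in> Mset" "g' \<in> Mset" "close e f f'" "close e g g'"
  shows "\<bar>supdist f g - supdist f' g'\<bar> \<le> 2 * e"
proof -
  have bdd: "\<And>f g. f \<in> Mset \<Longrightarrow> g \<in> Mset \<Longrightarrow> bdd_above ((\<lambda>t. \<bar>f t - g t\<bar>) ` {0..1})"
    by (rule bdd_aboveI2[where M=1]) (rule Mset_absdiff)
  have 1: "supdist f g \<le> supdist f' g' + 2 * e" unfolding supdist_def
  proof (rule cSUP_least)
    fix t :: real assume t: "t \<in> {0..1}"
    have "\<bar>f t - g t\<bar> \<le> \<bar>f' t - g' t\<bar> + 2 * e" using assms(5,6) t unfolding close_def by fastforce
    moreover have "\<bar>f' t - g' t\<bar> \<le> Sup ((\<lambda>t. \<bar>f' t - g' t\<bar>) ` {0..1})"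
      by (rule cSUP_upper[OF t bdd[OF assms(3,4)]])
    ultimately show "\<bar>f t - g t\<bar> \<le> Sup ((\<lambda>t. \<bar>f' t - g' t\<bar>) ` {0..1}) + 2 * e" by linarith
  qed auto
  have 2: "supdist f' g' \<le> supdist f g + 2 * e" unfolding supdist_def
  proof (rule cSUP_least)
    fix t :: real assume t: "t \<in> {0..1}"
    have "\<bar>f' t - g' t\<bar> \<le> \<bar>f t - g t\<bar> + 2 * e" using assms(5,6) t unfolding close_def by fastforce
    moreover have "\<bar>f t - g t\<bar> \<le> Sup ((\<lambda>t. \<bar>f t - g t\<bar>) ` {0..1})"
      by (rule cSUP_upper[OF t bdd[OF assms(1,2)]])
    ultimately show "\<bar>f' t - g' t\<bar> \<le> Sup ((\<lambda>t. \<bar>f t - g t\<bar>) ` {0..1}) + 2 * e" by linarith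
  qed auto
  from 1 2 show ?thesis by linarith
qed

lemma phi_lip:
  assumes "f \<in> Mset" "g \<in> Mset" "f' \<in> Mset" "g' \<in> Mset" "close e f f'" "close e g g'"
    "0 \<le> a" "a \<le> 2"
  shows "\<bar>phi a f g - phi a f' g'\<bar> \<le> 3 * e"
proof -
  obtain t where t: "t \<in> {0..1}" "f t + g t = a" using cross_ex[OF assms(1,2,7,8)] by blast
  obtain t' where t': "t' \<in> {0..1}" "f' t' + g' t' = a" using cross_ex[OF assms(3,4,7,8)] by blast
  have c: "\<bar>f t' - f' t'\<bar> \<le> e" "\<bar>g t' - g' t'\<bar> \<le> e" using assms(5,6) t' unfolding close_def by auto
  have "\<bar>f t - f' t'\<bar> \<le> 3 * e"
  proof (cases "t \<le> t'")
    case True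
    then have "f t \<le> f t'" "g t \<le> g t'" using Mset_mono assms t t' by auto
    then show ?thesis using c t t' by (simp add: abs_le_iff; linarith)
  next
    case False
    then have "f t' \<le> f t" "g t' \<le> g t" using Mset_mono assms t t' by auto
    then show ?thesis using c t t' by (simp add: abs_le_iff; linarith)
  qed
  then show ?thesis using phi_eq[OF assms(1,2) t] phi_eq[OF assms(3,4) t'] by simp
qed

lemma eval_lip:
  "in_lang p \<Longrightarrow> 0 \<le> e \<Longrightarrow> (\<forall>i\<in>fv p. \<sigma> i \<in> Mset \<and> \<sigma>' i \<in> Mset \<and> close e (\<sigma> i) (\<sigma>' i))
   \<Longrightarrow> \<bar>eval \<sigma> p - eval \<sigma>' p\<bar> \<le> L p * e"
proof (induction p arbitrary: \<sigma> \<sigma>')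
  case (Dist i j)
  then show ?case using supdist_lip[of "\<sigma> i" "\<sigma> j" "\<sigma>' i" "\<sigma>' j" e] by simp
next
  case (Phi a i j)
  have rb1: "0 \<le> (of_rat a::real)" and rb2: "(of_rat a::real) \<le> 1" using rat_bounds[of a] Phi by auto
  then have "0 \<le> (of_rat a::real)" "(of_rat a::real) \<le> 2" by linarith+
  then show ?case using Phi phi_lip[of "\<sigma> i" "\<sigma> j" "\<sigma>' i" "\<sigma>' j" e "of_rat a"] by simp
next
  case (Neg p)
  then have "\<bar>eval \<sigma> p - eval \<sigma>' p\<bar> \<le> L p * e" by simp
  then show ?case by (simp add: abs_minus_commute)
next
  case (Half p)
  then have "\<bar>eval \<sigma> p - eval \<sigma>' p\<bar> \<le> L p * e" by simp
  then show ?case by simp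
next
  case (Minus p q)
  then have "\<bar>eval \<sigma> p - eval \<sigma>' p\<bar> \<le> L p * e" "\<bar>eval \<sigma> q - eval \<sigma>' q\<bar> \<le> L q * e" by auto
  then show ?case by (simp add: distrib_right abs_le_iff) linarith
next
  case (SupQ i p)
  have cl: "close e h h" for h using SupQ(3) unfolding close_def by simp
  have IH: "\<bar>eval (\<sigma>(i:=h)) p - eval (\<sigma>'(i:=h)) p\<bar> \<le> L p * e" if h: "h \<in> Mset" for h
    by (rule SupQ.IH) (use SupQ.prems h cl in auto)
  have r1: "0 \<le> eval (\<sigma>(i:=h)) p \<and> eval (\<sigma>(i:=h)) p \<le> 1" if h: "h \<in> Mset" for h
    by (rule eval_range) (use SupQ.prems h in auto)
  have r2: "0 \<le> eval (\<sigma>'(i:=h)) p \<and> eval (\<sigma>'(i:=h)) p \<le> 1" if h: "h \<in> Mset" for h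
    by (rule eval_range) (use SupQ.prems h in auto)
  show ?case
    using sup_diff[OF Mset_ne, of "\<lambda>h. eval (\<sigma>(i:=h)) p" "\<lambda>h. eval (\<sigma>'(i:=h)) p" "L p * e"] r1 r2 IH
    by simp
next
  case (InfQ i p)
  have cl: "close e h h" for h using InfQ(3) unfolding close_def by simp
  have IH: "\<bar>eval (\<sigma>(i:=h)) p - eval (\<sigma>'(i:=h)) p\<bar> \<le> L p * e" if h: "h \<in> Mset" for h
    by (rule InfQ.IH) (use InfQ.prems h cl in auto)
  have r1: "0 \<le> eval (\<sigma>(i:=h)) p \<and> eval (\<sigma>(i:=h)) p \<le> 1" if h: "h \<in> Mset" for h
    by (rule eval_range) (use InfQ.prems h in auto)
  have r2: "0 \<le> eval (\<sigma>'(i:=h)) p \<and> eval (\<sigma>'(i:=h)) p \<le> 1" if h: "h \<in> Mset" for h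
    by (rule eval_range) (use InfQ.prems h in auto)
  show ?case
    using inf_diff[OF Mset_ne, of "\<lambda>h. eval (\<sigma>(i:=h)) p" "\<lambda>h. eval (\<sigma>'(i:=h)) p" "L p * e"] r1 r2 IH
    by simp
qed auto


definition reparam :: "(real \<Rightarrow> real) \<Rightarrow> (real \<Rightarrow> real) \<Rightarrow> bool" where
  "reparam k k' \<longleftrightarrow> continuous_on {0..1} k \<and> mono_on {0..1} k \<and> k ` {0..1} \<subseteq> {0..1} \<and> k 0 = 0 \<and> k 1 = 1 \<and>
     continuous_on {0..1} k' \<and> mono_on {0..1} k' \<and> k' ` {0..1} \<subseteq> {0..1} \<and> k' 0 = 0 \<and> k' 1 = 1 \<and>
     (\<forall>t\<in>{0..1}. k (k' t) = t \<and> k' (k t) = t)"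

lemma reparam_sym: "reparam k k' \<Longrightarrow> reparam k' k"
  unfolding reparam_def by blast

lemma reparam_comp: "reparam k k' \<Longrightarrow> f \<in> Mset \<Longrightarrow> (\<lambda>t. f (k t)) \<in> Mset"
  unfolding reparam_def using Mset_comp by blast

lemma reparam_img: "reparam k k' \<Longrightarrow> k ` {0..1} = {0..1}"
proof
  assume r: "reparam k k'"
  then show "k ` {0..1} \<subseteq> {0..1}" unfolding reparam_def by blast
  show "{0..1} \<subseteq> k ` {0..1}"
  proof
    fix u :: real assume u: "u \<in> {0..1}"
    then have "k' u \<in> {0..1}" "k (k' u) = u" using r unfolding reparam_def by blast+
    then show "u \<in> k ` {0..1}" by (metis image_eqI)
  qed
qed

lemma reparam_in: "reparam k k' \<Longrightarrow> t \<in> {0..1} \<Longrightarrow> k t \<in> {0..1}"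
  using reparam_img by blast

lemma eval_inv:
  assumes r: "reparam k k'"
  shows "in_lang p \<Longrightarrow> (\<forall>i\<in>fv p. \<sigma> i \<in> Mset \<and> (\<forall>t\<in>{0..1}. \<sigma>' i t = \<sigma> i (k t))) \<Longrightarrow> eval \<sigma>' p = eval \<sigma> p"
proof (induction p arbitrary: \<sigma> \<sigma>')
  case (Dist i j)
  have "(\<lambda>t. \<bar>\<sigma>' i t - \<sigma>' j t\<bar>) ` {0..1} = (\<lambda>t. \<bar>\<sigma> i (k t) - \<sigma> j (k t)\<bar>) ` {0..1}"
    by (rule image_cong) (use Dist in auto)
  also have "\<dots> = (\<lambda>u. \<bar>\<sigma> i u - \<sigma> j u\<bar>) ` (k ` {0..1})" by (simp add: image_image)
  also have "\<dots> = (\<lambda>u. \<bar>\<sigma> i u - \<sigma> j u\<bar>) ` {0..1}" using reparam_img[OF r] by simp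
  finally show ?case by (simp add: supdist_def)
next
  case (Phi a i j)
  have rb1: "0 \<le> (of_rat a::real)" and rb2: "(of_rat a::real) \<le> 1" using rat_bounds[of a] Phi by auto
  have m: "\<sigma> i \<in> Mset" "\<sigma> j \<in> Mset" using Phi by auto
  have m': "\<sigma>' i \<in> Mset" "\<sigma>' j \<in> Mset"
    using Mset_cong[OF reparam_comp[OF r m(1)]] Mset_cong[OF reparam_comp[OF r m(2)]] Phi by auto
  have "\<exists>t\<in>{0..1}. \<sigma> i t + \<sigma> j t = of_rat a" by (rule cross_ex[OF m]) (use rb1 rb2 in linarith)+
  then obtain s where s: "s \<in> {0..1}" "\<sigma> i s + \<sigma> j s = of_rat a" by blast
  have ks: "k' s \<in> {0..1}" "k (k' s) = s" using reparam_in[OF reparam_sym[OF r] s(1)] r s(1) unfolding reparam_def by auto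
  have e: "\<sigma>' i (k' s) = \<sigma> i s" "\<sigma>' j (k' s) = \<sigma> j s" using Phi ks by auto
  show ?case using phi_eq[OF m s] phi_eq[OF m' ks(1)] s(2) e by simp
next
  case (SupQ i p)
  have "(\<lambda>h. eval (\<sigma>'(i := h)) p) ` Mset = (\<lambda>h. eval (\<sigma>(i := h)) p) ` Mset"
  proof (intro set_eqI iffI)
    fix x assume "x \<in> (\<lambda>h. eval (\<sigma>'(i := h)) p) ` Mset"
    then obtain h where h: "h \<in> Mset" "x = eval (\<sigma>'(i := h)) p" by auto
    have hk: "(\<lambda>t. h (k' t)) \<in> Mset" using reparam_comp[OF reparam_sym[OF r] h(1)] .
    have "eval (\<sigma>'(i := h)) p = eval (\<sigma>(i := (\<lambda>t. h (k' t)))) p"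
      by (rule SupQ.IH) (use SupQ.prems hk r in \<open>auto simp: reparam_def\<close>)
    then show "x \<in> (\<lambda>h. eval (\<sigma>(i := h)) p) ` Mset" using h hk by auto
  next
    fix x assume "x \<in> (\<lambda>h. eval (\<sigma>(i := h)) p) ` Mset"
    then obtain h where h: "h \<in> Mset" "x = eval (\<sigma>(i := h)) p" by auto
    have hk: "(\<lambda>t. h (k t)) \<in> Mset" using reparam_comp[OF r h(1)] .
    have "eval (\<sigma>'(i := (\<lambda>t. h (k t)))) p = eval (\<sigma>(i := h)) p"
      by (rule SupQ.IH) (use SupQ.prems h in auto)
    then show "x \<in> (\<lambda>h. eval (\<sigma>'(i := h)) p) ` Mset" using h hk by (metis image_eqI)
  qed
  then show ?case by simp
next
  case (InfQ i p)
  have "(\<lambda>h. eval (\<sigma>'(i := h)) p) ` Mset = (\<lambda>h. eval (\<sigma>(i := h)) p) ` Mset"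
  proof (intro set_eqI iffI)
    fix x assume "x \<in> (\<lambda>h. eval (\<sigma>'(i := h)) p) ` Mset"
    then obtain h where h: "h \<in> Mset" "x = eval (\<sigma>'(i := h)) p" by auto
    have hk: "(\<lambda>t. h (k' t)) \<in> Mset" using reparam_comp[OF reparam_sym[OF r] h(1)] .
    have "eval (\<sigma>'(i := h)) p = eval (\<sigma>(i := (\<lambda>t. h (k' t)))) p"
      by (rule InfQ.IH) (use InfQ.prems hk r in \<open>auto simp: reparam_def\<close>)
    then show "x \<in> (\<lambda>h. eval (\<sigma>(i := h)) p) ` Mset" using h hk by auto
  next
    fix x assume "x \<in> (\<lambda>h. eval (\<sigma>(i := h)) p) ` Mset"
    then obtain h where h: "h \<in> Mset" "x = eval (\<sigma>(i := h)) p" by auto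
    have hk: "(\<lambda>t. h (k t)) \<in> Mset" using reparam_comp[OF r h(1)] .
    have "eval (\<sigma>'(i := (\<lambda>t. h (k t)))) p = eval (\<sigma>(i := h)) p"
      by (rule InfQ.IH) (use InfQ.prems h in auto)
    then show "x \<in> (\<lambda>h. eval (\<sigma>'(i := h)) p) ` Mset" using h hk by (metis image_eqI)
  qed
  then show ?case by simp
next
  case (Minus p q)
  then have "eval \<sigma>' p = eval \<sigma> p" "eval \<sigma>' q = eval \<sigma> q" by auto
  then show ?case by simp
qed auto

lemma reparam_exists:
  fixes A B :: "real \<Rightarrow> real"
  assumes cA: "continuous_on {0..1} A" and cB: "continuous_on {0..1} B"
    and sA: "\<And>x y. x \<in> {0..1} \<Longrightarrow> y \<in> {0..1} \<Longrightarrow> x < y \<Longrightarrow> A x < A y"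
    and sB: "\<And>x y. x \<in> {0..1} \<Longrightarrow> y \<in> {0..1} \<Longrightarrow> x < y \<Longrightarrow> B x < B y"
    and e0: "A 0 = B 0" and e1: "A 1 = B 1"
  shows "\<exists>k. continuous_on {0..1} k \<and> mono_on {0..1} k \<and> k ` {0..1} \<subseteq> {0..1} \<and> k 0 = 0 \<and> k 1 = 1
     \<and> (\<forall>t\<in>{0..1}. A (k t) = B t)"
proof -
  define g where "g = inv_into {0..1} A"
  have inj: "inj_on A {0..1}"
  proof (rule inj_onI)
    fix x y assume x: "x \<in> {0..1}" and y: "y \<in> {0..1}" and e: "A x = A y"
    show "x = y"
    proof (rule ccontr)
      assume "x \<noteq> y"
      then consider "x < y" | "y < x" by fastforce
      then show False using sA[OF x y] sA[OF y x] e by cases auto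
    qed
  qed
  have gA: "\<forall>x\<in>{0..1}. g (A x) = x" unfolding g_def using inj by auto
  have cg: "continuous_on (A ` {0..1}) g"
    by (rule continuous_on_inv[OF cA compact_Icc gA])
  have Bin: "B t \<in> A ` {0..1}" if t: "t \<in> {0..1}" for t
  proof -
    have "B 0 \<le> B t" using sB[of 0 t] t by (cases "t = 0") (auto simp: le_less)
    moreover have "B t \<le> B 1" using sB[of t 1] t by (cases "t = 1") (auto simp: le_less)
    ultimately have "A 0 \<le> B t" "B t \<le> A 1" using e0 e1 by auto
    from IVT'[of A 0 "B t" 1, OF this _ cA] obtain x where "0 \<le> x" "x \<le> 1" "A x = B t" by auto
    then show ?thesis by (metis atLeastAtMost_iff image_eqI)
  qed
  define k where "k = (\<lambda>t. g (B t))"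
  have Ak: "A (k t) = B t" if "t \<in> {0..1}" for t
    unfolding k_def g_def using Bin[OF that] by (simp add: f_inv_into_f)
  have kin: "k t \<in> {0..1}" if "t \<in> {0..1}" for t
    unfolding k_def g_def using inv_into_into[OF Bin[OF that]] .
  have ck: "continuous_on {0..1} k" unfolding k_def
    by (rule continuous_on_compose2[OF cg cB]) (use Bin in auto)
  have mk: "mono_on {0..1} k"
  proof (rule mono_onI)
    fix x y :: real assume xy: "x \<in> {0..1}" "y \<in> {0..1}" "x \<le> y"
    show "k x \<le> k y"
    proof (rule ccontr)
      assume "\<not> k x \<le> k y"
      then have "A (k y) < A (k x)" using sA kin xy by auto
      then have "B y < B x" using Ak xy by auto
      moreover have "B x \<le> B y" using sB xy by (cases "x = y") (auto simp: le_less)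
      ultimately show False by simp
    qed
  qed
  have k0: "k 0 = 0" by (rule inj_onD[OF inj]) (use Ak[of 0] kin[of 0] e0 in auto)
  have k1: "k 1 = 1" by (rule inj_onD[OF inj]) (use Ak[of 1] kin[of 1] e1 in auto)
  show ?thesis using ck mk kin k0 k1 Ak by (intro exI[of _ k]) auto
qed


lemma strict_inj:
  fixes A :: "real \<Rightarrow> real"
  assumes sA: "\<And>x y. x \<in> {0..1} \<Longrightarrow> y \<in> {0..1} \<Longrightarrow> x < y \<Longrightarrow> A x < A y"
    and x: "x \<in> {0..1}" and y: "y \<in> {0..1}" and e: "A x = A y"
  shows "x = y"
proof (rule ccontr)
  assume "x \<noteq> y"
  then consider "x < y" | "y < x" by fastforce
  then show False using sA[OF x y] sA[OF y x] e by cases auto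
qed

lemma sum_fun_props:
  fixes fs :: "(real \<Rightarrow> real) list"
  assumes "length fs = n" "set fs \<subseteq> Mset" "0 < d"
    and S_def: "S = (\<lambda>t. (\<Sum>i<n. (fs!i) t) + d * t)"
  shows "continuous_on {0..1} S"
    "\<And>x y. x \<in> {0..1} \<Longrightarrow> y \<in> {0..1} \<Longrightarrow> x < y \<Longrightarrow> S x < S y"
    "S 0 = 0" "S 1 = real n + d"
proof -
  have m: "\<And>i. i < n \<Longrightarrow> fs!i \<in> Mset" using assms(1,2) nth_mem by blast
  show "continuous_on {0..1} S" unfolding S_def
    by (intro continuous_intros continuous_on_sum) (use m MsetD(1) in auto)
  show "S x < S y" if "x \<in> {0..1}" "y \<in> {0..1}" "x < y" for x y
  proof -
    have "(\<Sum>i<n. (fs!i) x) \<le> (\<Sum>i<n. (fs!i) y)"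
      by (rule sum_mono) (use m Mset_mono that in auto)
    moreover have "d * x < d * y" using assms(3) that by simp
    ultimately show ?thesis unfolding S_def by linarith
  qed
  have "(\<Sum>i<n. (fs!i) 0) = 0" by (rule sum.neutral) (use m MsetD(3) in auto)
  then show "S 0 = 0" unfolding S_def by simp
  have "(\<Sum>i<n. (fs!i) 1) = (\<Sum>i<n. 1)" by (rule sum.cong) (use m MsetD(4) in auto)
  then show "S 1 = real n + d" unfolding S_def by simp
qed

lemma close_reparam:
  fixes fs gs :: "(real \<Rightarrow> real) list"
  assumes len: "length fs = n" "length gs = n" and ms: "set fs \<subseteq> Mset" "set gs \<subseteq> Mset"
    and im: "im fs = im gs" and d: "0 < d"
    and t: "t \<in> {0..1}" and u: "u \<in> {0..1}"
    and eq: "(\<Sum>i<n. (fs!i) u) + d * u = (\<Sum>i<n. (gs!i) t) + d * t"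
    and i: "i < n"
  shows "\<bar>(gs!i) t - (fs!i) u\<bar> \<le> d"
proof -
  have m: "\<And>i. i < n \<Longrightarrow> fs!i \<in> Mset" using len(1) ms(1) nth_mem by blast
  have "map (\<lambda>g. g t) gs \<in> im gs" unfolding im_def using t by (rule imageI)
  then have "map (\<lambda>g. g t) gs \<in> im fs" using im by simp
  then obtain t'' where t'': "t'' \<in> {0..1}" "map (\<lambda>g. g t) gs = map (\<lambda>f. f t'') fs"
    unfolding im_def by (rule imageE)
  have gt: "(gs!j) t = (fs!j) t''" if "j < n" for j
    using arg_cong[OF t''(2), of "\<lambda>xs. xs ! j"] that len by simp
  have sg: "(\<Sum>j<n. (gs!j) t) = (\<Sum>j<n. (fs!j) t'')" using gt by simp
  show ?thesis
  proof (cases "u \<le> t''")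
    case True
    have nn: "\<And>j. j \<in> {..<n} \<Longrightarrow> 0 \<le> (fs!j) t'' - (fs!j) u" using m Mset_mono True u t'' by auto
    have "(fs!i) t'' - (fs!i) u \<le> (\<Sum>j<n. (fs!j) t'' - (fs!j) u)"
      using member_le_sum[of i "{..<n}" "\<lambda>j. (fs!j) t'' - (fs!j) u"] nn i by auto
    also have "\<dots> = (\<Sum>j<n. (fs!j) t'') - (\<Sum>j<n. (fs!j) u)" by (simp add: sum_subtractf)
    also have "\<dots> = d * (u - t)" using eq sg by (simp add: algebra_simps)
    also have "\<dots> \<le> d" using d t u by (simp add: mult_left_le)
    finally show ?thesis using nn[of i] i gt[OF i] by simp
  next
    case False
    have nn: "\<And>j. j \<in> {..<n} \<Longrightarrow> 0 \<le> (fs!j) u - (fs!j) t''" using m Mset_mono False u t'' by auto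
    have "(fs!i) u - (fs!i) t'' \<le> (\<Sum>j<n. (fs!j) u - (fs!j) t'')"
      using member_le_sum[of i "{..<n}" "\<lambda>j. (fs!j) u - (fs!j) t''"] nn i by auto
    also have "\<dots> = (\<Sum>j<n. (fs!j) u) - (\<Sum>j<n. (fs!j) t'')" by (simp add: sum_subtractf)
    also have "\<dots> = d * (t - u)" using eq sg by (simp add: algebra_simps)
    also have "\<dots> \<le> d" using d t u by (simp add: mult_left_le)
    finally show ?thesis using nn[of i] i gt[OF i] by simp
  qed
qed

lemma im_imp_same_type:
  fixes fs gs :: "(real \<Rightarrow> real) list"
  assumes len: "length fs = n" "length gs = n" and ms: "set fs \<subseteq> Mset" "set gs \<subseteq> Mset"
    and im: "im fs = im gs"
  shows "same_type fs gs"
  unfolding same_type_def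
proof (intro conjI allI impI)
  show "length fs = length gs" using len by simp
  fix p assume p: "in_lang p \<and> fv p \<subseteq> {..<length fs}"
  have mf: "\<And>i. i < n \<Longrightarrow> fs!i \<in> Mset" using len(1) ms(1) nth_mem by blast
  have mg: "\<And>i. i < n \<Longrightarrow> gs!i \<in> Mset" using len(2) ms(2) nth_mem by blast
  have bound: "\<bar>eval (asg gs) p - eval (asg fs) p\<bar> \<le> L p * d" if d: "0 < d" for d
  proof -
    define S where "S = (\<lambda>t. (\<Sum>i<n. (fs!i) t) + d * t)"
    define T where "T = (\<lambda>t. (\<Sum>i<n. (gs!i) t) + d * t)"
    note PS = sum_fun_props[OF len(1) ms(1) d S_def]
    note PT = sum_fun_props[OF len(2) ms(2) d T_def]
    obtain k where k: "continuous_on {0..1} k" "mono_on {0..1} k" "k ` {0..1} \<subseteq> {0..1}" "k 0 = 0" "k 1 = 1"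
      "\<forall>t\<in>{0..1}. S (k t) = T t"
      using reparam_exists[OF PS(1) PT(1) PS(2) PT(2)] PS(3,4) PT(3,4) by auto
    obtain k' where k': "continuous_on {0..1} k'" "mono_on {0..1} k'" "k' ` {0..1} \<subseteq> {0..1}" "k' 0 = 0" "k' 1 = 1"
      "\<forall>t\<in>{0..1}. T (k' t) = S t"
      using reparam_exists[OF PT(1) PS(1) PT(2) PS(2)] PS(3,4) PT(3,4) by auto
    have kk: "k (k' t) = t" if t: "t \<in> {0..1}" for t
    proof -
      have kt: "k' t \<in> {0..1}" using k'(3) t by blast
      then have "k (k' t) \<in> {0..1}" using k(3) by blast
      moreover have "S (k (k' t)) = S t" using k(6) k'(6) t kt by auto
      ultimately show ?thesis using strict_inj[of S, OF PS(2)] t by blast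
    qed
    have kk': "k' (k t) = t" if t: "t \<in> {0..1}" for t
    proof -
      have kt: "k t \<in> {0..1}" using k(3) t by blast
      then have "k' (k t) \<in> {0..1}" using k'(3) by blast
      moreover have "T (k' (k t)) = T t" using k'(6) k(6) t kt by auto
      ultimately show ?thesis using strict_inj[of T, OF PT(2)] t by blast
    qed
    have r: "reparam k k'" unfolding reparam_def using k k' kk kk' by blast
    define \<sigma>' where "\<sigma>' = (\<lambda>i t. asg fs i (k t))"
    have "eval \<sigma>' p = eval (asg fs) p"
      by (rule eval_inv[OF r]) (use p len mf in \<open>auto simp: \<sigma>'_def asg_def\<close>)
    moreover have "\<bar>eval (asg gs) p - eval \<sigma>' p\<bar> \<le> L p * d"
    proof (rule eval_lip)
      show "in_lang p" "0 \<le> d" using p d by auto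
      show "\<forall>i\<in>fv p. asg gs i \<in> Mset \<and> \<sigma>' i \<in> Mset \<and> close d (asg gs i) (\<sigma>' i)"
      proof
        fix i assume "i \<in> fv p"
        then have i: "i < n" using p len by auto
        have "close d (gs!i) (\<lambda>t. (fs!i) (k t))" unfolding close_def
        proof
          fix t :: real assume t: "t \<in> {0..1}"
          have "k t \<in> {0..1}" using k(3) t by blast
          moreover have "(\<Sum>i<n. (fs!i) (k t)) + d * k t = (\<Sum>i<n. (gs!i) t) + d * t"
            using k(6) t unfolding S_def T_def by auto
          ultimately show "\<bar>(gs!i) t - (fs!i) (k t)\<bar> \<le> d"
            using close_reparam[OF len ms im d t] i by blast
        qed
        then show "asg gs i \<in> Mset \<and> \<sigma>' i \<in> Mset \<and> close d (asg gs i) (\<sigma>' i)"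
          using i len mf mg reparam_comp[OF r mf[OF i]] by (simp add: \<sigma>'_def asg_def)
      qed
    qed
    ultimately show ?thesis by simp
  qed
  show "eval (asg fs) p = eval (asg gs) p"
  proof (rule ccontr)
    assume ne: "eval (asg fs) p \<noteq> eval (asg gs) p"
    define D where "D = \<bar>eval (asg gs) p - eval (asg fs) p\<bar>"
    have D: "0 < D" using ne unfolding D_def by auto
    define d where "d = D / (L p + 1)"
    have Lp: "0 \<le> L p" by (rule L_nonneg)
    have d: "0 < d" unfolding d_def using D Lp by simp
    have "L p * d < D" unfolding d_def using D Lp by (simp add: field_simps)
    then show False using bound[OF d] unfolding D_def by linarith
  qed
qed


definition fmin :: "form \<Rightarrow> form \<Rightarrow> form" where "fmin p q = Minus p (Minus p q)"
definition fmax :: "form \<Rightarrow> form \<Rightarrow> form" where "fmax p q = Neg (fmin (Neg p) (Neg q))"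
definition fabs :: "form \<Rightarrow> form \<Rightarrow> form" where "fabs p q = fmax (Minus p q) (Minus q p)"

lemma eval_fmin: "0 \<le> eval \<sigma> p \<Longrightarrow> 0 \<le> eval \<sigma> q \<Longrightarrow> eval \<sigma> (fmin p q) = min (eval \<sigma> p) (eval \<sigma> q)"
  unfolding fmin_def by (simp add: max_def min_def)

lemma eval_fmax: "eval \<sigma> p \<le> 1 \<Longrightarrow> eval \<sigma> q \<le> 1 \<Longrightarrow> eval \<sigma> (fmax p q) = max (eval \<sigma> p) (eval \<sigma> q)"
  unfolding fmax_def by (auto simp add: eval_fmin max_def min_def)

lemma eval_fabs: "0 \<le> eval \<sigma> p \<Longrightarrow> eval \<sigma> p \<le> 1 \<Longrightarrow> 0 \<le> eval \<sigma> q \<Longrightarrow> eval \<sigma> q \<le> 1 \<Longrightarrow>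
    eval \<sigma> (fabs p q) = \<bar>eval \<sigma> p - eval \<sigma> q\<bar>"
  unfolding fabs_def by (subst eval_fmax) (auto simp: max_def)

lemma fv_f: "fv (fmin p q) = fv p \<union> fv q" "fv (fmax p q) = fv p \<union> fv q" "fv (fabs p q) = fv p \<union> fv q"
  unfolding fmin_def fmax_def fabs_def by auto

lemma lang_f: "in_lang (fmin p q) = (in_lang p \<and> in_lang q)" "in_lang (fmax p q) = (in_lang p \<and> in_lang q)"
  "in_lang (fabs p q) = (in_lang p \<and> in_lang q)"
  unfolding fmin_def fmax_def fabs_def by auto

fun cst :: "bool list \<Rightarrow> form" where
  "cst [] = Minus One One"
| "cst (b # bs) = (if b then Neg (Half (Neg (cst bs))) else Half (cst bs))"

fun bv :: "bool list \<Rightarrow> real" where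
  "bv [] = 0"
| "bv (b # bs) = (if b then (1 + bv bs) / 2 else bv bs / 2)"

lemma eval_cst: "eval \<sigma> (cst bs) = bv bs"
  by (induction bs) (auto simp: field_simps)

lemma fv_cst: "fv (cst bs) = {}" by (induction bs) auto
lemma lang_cst: "in_lang (cst bs)" by (induction bs) auto

lemma bv_range: "0 \<le> bv bs \<and> bv bs \<le> 1"
  by (induction bs) auto

lemma bv_approx: "x \<in> {0..1} \<Longrightarrow> \<exists>bs. \<bar>bv bs - x\<bar> \<le> (1/2)^m"
proof (induction m arbitrary: x)
  case 0
  then show ?case by (intro exI[of _ "[]"]) auto
next
  case (Suc m)
  show ?case
  proof (cases "x \<le> 1/2")
    case True
    then obtain bs where h: "\<bar>bv bs - 2 * x\<bar> \<le> (1/2)^m" using Suc by fastforce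
    have "bv (False # bs) - x = (bv bs - 2 * x) / 2" by simp
    then have "\<bar>bv (False # bs) - x\<bar> = \<bar>bv bs - 2 * x\<bar> / 2" unfolding \<open>bv (False # bs) - x = (bv bs - 2 * x) / 2\<close> by (simp only: abs_divide)
    then have "\<bar>bv (False # bs) - x\<bar> \<le> (1/2)^Suc m" using h by simp
    then show ?thesis by blast
  next
    case False
    then obtain bs where h: "\<bar>bv bs - (2 * x - 1)\<bar> \<le> (1/2)^m" using Suc by fastforce
    have "bv (True # bs) - x = (bv bs - (2 * x - 1)) / 2" by (simp add: field_simps)
    then have "\<bar>bv (True # bs) - x\<bar> = \<bar>bv bs - (2 * x - 1)\<bar> / 2" unfolding \<open>bv (True # bs) - x = (bv bs - (2 * x - 1)) / 2\<close> by (simp only: abs_divide)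
    then have "\<bar>bv (True # bs) - x\<bar> \<le> (1/2)^Suc m" using h by simp
    then show ?thesis by blast
  qed
qed

lemma bv_approx_eps: "x \<in> {0..1} \<Longrightarrow> 0 < e \<Longrightarrow> \<exists>bs. \<bar>bv bs - x\<bar> \<le> e"
proof -
  assume x: "x \<in> {0..1}" and e: "0 < e"
  obtain m where m: "(1/2::real)^m < e" using real_arch_pow_inv[OF e, of "1/2"] by auto
  obtain bs where "\<bar>bv bs - x\<bar> \<le> (1/2)^m" using bv_approx[OF x] by blast
  then show ?thesis using m by (intro exI[of _ bs]) linarith
qed

definition ramp :: "real \<Rightarrow> real \<Rightarrow> real \<Rightarrow> real" where
  "ramp a b x = max 0 (min 1 ((x - a) / (b - a)))"

lemma ramp_props:
  assumes "a < b"
  shows "continuous_on S (ramp a b)" "\<And>x y. x \<le> y \<Longrightarrow> ramp a b x \<le> ramp a b y"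
    "\<And>x. x \<le> a \<Longrightarrow> ramp a b x = 0" "\<And>x. b \<le> x \<Longrightarrow> ramp a b x = 1"
    "\<And>x. 0 \<le> ramp a b x"
proof -
  show "continuous_on S (ramp a b)" unfolding ramp_def by (intro continuous_intros) (use assms in auto)
  show "ramp a b x \<le> ramp a b y" if "x \<le> y" for x y
  proof -
    have "(x - a) / (b - a) \<le> (y - a) / (b - a)" using assms that by (simp add: divide_right_mono)
    then show ?thesis unfolding ramp_def by simp
  qed
  show "ramp a b x = 0" if "x \<le> a" for x
  proof -
    have "(x - a) / (b - a) \<le> 0" using assms that by (simp add: divide_nonpos_pos)
    then show ?thesis unfolding ramp_def by simp
  qed
  show "ramp a b x = 1" if "b \<le> x" for x
  proof -
    have "1 \<le> (x - a) / (b - a)" using assms that by simp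
    then show ?thesis unfolding ramp_def by simp
  qed
  show "0 \<le> ramp a b x" for x unfolding ramp_def by simp
qed

lemma build_M:
  assumes s: "0 < s1" "s1 < s2" "s2 < 1" and v: "0 \<le> v1" "v1 \<le> v2" "v2 \<le> 1"
  shows "\<exists>y\<in>Mset. y s1 = v1 \<and> y s2 = v2"
proof -
  define y where "y = (\<lambda>x. v1 * ramp 0 s1 x + (v2 - v1) * ramp s1 s2 x + (1 - v2) * ramp s2 1 x)"
  note r1 = ramp_props[of 0 s1] and r2 = ramp_props[of s1 s2] and r3 = ramp_props[of s2 1]
  have c: "continuous_on {0..1} y" unfolding y_def
    by (intro continuous_intros r1(1) r2(1) r3(1)) (use s in auto)
  have m: "y x \<le> y x'" if "x \<le> x'" for x x'
  proof -
    have "v1 * ramp 0 s1 x \<le> v1 * ramp 0 s1 x'" using r1(2)[OF _ that] s v by (simp add: mult_left_mono)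
    moreover have "(v2 - v1) * ramp s1 s2 x \<le> (v2 - v1) * ramp s1 s2 x'" using r2(2)[OF _ that] s v by (simp add: mult_left_mono)
    moreover have "(1 - v2) * ramp s2 1 x \<le> (1 - v2) * ramp s2 1 x'" using r3(2)[OF _ that] s v by (simp add: mult_left_mono)
    ultimately show ?thesis unfolding y_def by linarith
  qed
  have y0: "y 0 = 0" unfolding y_def using r1(3)[of 0] r2(3)[of 0] r3(3)[of 0] s by simp
  have y1: "y 1 = 1" unfolding y_def using r1(4)[of 1] r2(4)[of 1] r3(4)[of 1] s by simp
  have ys1: "y s1 = v1" unfolding y_def using r1(4)[of s1] r2(3)[of s1] r3(3)[of s1] s by simp
  have ys2: "y s2 = v2" unfolding y_def using r1(4)[of s2] r2(4)[of s2] r3(3)[of s2] s by simp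
  have img: "y ` {0..1} \<subseteq> {0..1}"
  proof
    fix z assume "z \<in> y ` {0..1}"
    then obtain x where x: "x \<in> {0..1}" "z = y x" by auto
    then have "y 0 \<le> y x" "y x \<le> y 1" using m by auto
    then show "z \<in> {0..1}" using x y0 y1 by auto
  qed
  have "y \<in> Mset" unfolding Mset_def using c m y0 y1 img by (auto intro: mono_onI)
  then show ?thesis using ys1 ys2 by blast
qed


lemma separate:
  fixes gs :: "(real \<Rightarrow> real) list" and p :: "real list"
  assumes len: "length gs = n" "length p = n" and ms: "set gs \<subseteq> Mset"
    and pr: "\<And>k. k < n \<Longrightarrow> 0 \<le> p!k \<and> p!k \<le> 1"
    and notin: "p \<notin> im gs"
  shows "\<exists>i<n. \<exists>j<n. \<exists>s\<in>{0..1}. (gs!i) s < p!i \<and> p!j < (gs!j) s"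
proof (rule ccontr)
  assume H: "\<not> ?thesis"
  have m: "\<And>k. k < n \<Longrightarrow> gs!k \<in> Mset" using len(1) ms nth_mem by blast
  define A where "A = {s\<in>{0..1}. \<forall>k<n. (gs!k) s \<le> p!k}"
  have A0: "0 \<in> A" unfolding A_def using MsetD(3)[OF m] pr by fastforce
  have Ab: "bdd_above A" unfolding A_def by (rule bdd_aboveI[where M=1]) auto
  define T where "T = Sup A"
  have TA: "s \<le> T" if "s \<in> A" for s unfolding T_def by (rule cSup_upper[OF that Ab])
  have T0: "0 \<le> T" using TA[OF A0] .
  have Ane: "A \<noteq> {}" using A0 by auto
  have T1: "T \<le> 1" unfolding T_def by (rule cSup_least[OF Ane]) (auto simp: A_def)
  have Tin: "T \<in> {0..1}" using T0 T1 by auto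
  have cont: "\<exists>d>0. \<forall>s\<in>{0..1}. \<bar>s - T\<bar> < d \<longrightarrow> \<bar>(gs!k) s - (gs!k) T\<bar> < e" if "k < n" "0 < e" for k e
    using MsetD(1)[OF m[OF that(1)]] Tin that(2) unfolding continuous_on_iff dist_real_def by blast
  have le: "(gs!k) T \<le> p!k" if k: "k < n" for k
  proof (rule ccontr)
    assume "\<not> (gs!k) T \<le> p!k"
    then have e: "0 < (gs!k) T - p!k" by simp
    obtain d where d: "0 < d" "\<forall>s\<in>{0..1}. \<bar>s - T\<bar> < d \<longrightarrow> \<bar>(gs!k) s - (gs!k) T\<bar> < (gs!k) T - p!k"
      using cont[OF k e] by blast
    have "T - d < T" using d by simp
    then obtain s where s: "s \<in> A" "T - d < s" unfolding T_def using less_cSup_iff[OF _ Ab] A0 by (metis empty_iff T_def)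
    have "s \<le> T" using TA[OF s(1)] .
    moreover have sI: "s \<in> {0..1}" "(gs!k) s \<le> p!k" using s(1) k unfolding A_def by auto
    ultimately have "\<bar>(gs!k) s - (gs!k) T\<bar> < (gs!k) T - p!k" using d s by auto
    then show False using sI by linarith
  qed
  have ge: "p!k \<le> (gs!k) T" if k: "k < n" for k
  proof (cases "T = 1")
    case True
    then show ?thesis using MsetD(4)[OF m[OF k]] pr[OF k] by simp
  next
    case False
    then have T1': "T < 1" using T1 by simp
    show ?thesis
    proof (rule ccontr)
      assume "\<not> p!k \<le> (gs!k) T"
      then have e: "0 < p!k - (gs!k) T" by simp
      obtain d where d: "0 < d" "\<forall>s\<in>{0..1}. \<bar>s - T\<bar> < d \<longrightarrow> \<bar>(gs!k) s - (gs!k) T\<bar> < p!k - (gs!k) T"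
        using cont[OF k e] by blast
      define s where "s = min 1 (T + d / 2)"
      have s: "s \<in> {0..1}" "T < s" "\<bar>s - T\<bar> < d" unfolding s_def using T0 T1' d by auto
      have "s \<notin> A" using TA s(2) by fastforce
      then obtain m' where m': "m' < n" "p!m' < (gs!m') s" using s(1) unfolding A_def by auto
      have "\<bar>(gs!k) s - (gs!k) T\<bar> < p!k - (gs!k) T" using d(2) s(1,3) by blast
      then have "(gs!k) s < p!k" by linarith
      then show False using H m' k s(1) by blast
    qed
  qed
  have "map (\<lambda>g. g T) gs = p"
    by (rule nth_equalityI) (use len le ge in \<open>auto intro: order.antisym\<close>)
  then have "p \<in> im gs" unfolding im_def using Tin by (metis image_eqI)
  then show False using notin by simp
qed


definition Pform :: "nat \<Rightarrow> nat \<Rightarrow> rat \<Rightarrow> bool list \<Rightarrow> bool list \<Rightarrow> nat \<Rightarrow> form" where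
  "Pform j i q bsA bsB y = InfQ y (fmax (fabs (Phi 1 j y) (cst bsA)) (fabs (Phi q i y) (cst bsB)))"

lemma Pform_lang: "0 \<le> q \<Longrightarrow> q \<le> 1 \<Longrightarrow> in_lang (Pform j i q bsA bsB y)"
  unfolding Pform_def by (simp add: lang_f lang_cst)

lemma Pform_fv: "y \<noteq> i \<Longrightarrow> y \<noteq> j \<Longrightarrow> fv (Pform j i q bsA bsB y) = {i, j}"
  unfolding Pform_def by (auto simp: fv_f fv_cst)

lemma eval_Pform:
  assumes "\<sigma> i \<in> Mset" "\<sigma> j \<in> Mset" "y \<noteq> i" "y \<noteq> j" "0 \<le> q" "q \<le> 1"
  shows "eval \<sigma> (Pform j i q bsA bsB y) =
    Inf ((\<lambda>h. max \<bar>phi 1 (\<sigma> j) h - bv bsA\<bar> \<bar>phi (of_rat q) (\<sigma> i) h - bv bsB\<bar>) ` Mset)"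
proof -
  have rb1: "0 \<le> (of_rat q::real)" and rb2: "(of_rat q::real) \<le> 1" using rat_bounds[of q] assms by auto
  have "eval (\<sigma>(y := h)) (fmax (fabs (Phi 1 j y) (cst bsA)) (fabs (Phi q i y) (cst bsB)))
     = max \<bar>phi 1 (\<sigma> j) h - bv bsA\<bar> \<bar>phi (of_rat q) (\<sigma> i) h - bv bsB\<bar>" if h: "h \<in> Mset" for h
  proof -
    have p1: "0 \<le> phi 1 (\<sigma> j) h" "phi 1 (\<sigma> j) h \<le> 1" using phi_range[OF assms(2) h] by auto
    have p2: "0 \<le> phi (of_rat q) (\<sigma> i) h" "phi (of_rat q) (\<sigma> i) h \<le> 1" using phi_range[OF assms(1) h rb1] rb2 by linarith+
    have e1: "eval (\<sigma>(y := h)) (Phi 1 j y) = phi 1 (\<sigma> j) h" using assms by simp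
    have e2: "eval (\<sigma>(y := h)) (Phi q i y) = phi (of_rat q) (\<sigma> i) h" using assms by simp
    have a1: "eval (\<sigma>(y := h)) (fabs (Phi 1 j y) (cst bsA)) = \<bar>phi 1 (\<sigma> j) h - bv bsA\<bar>"
      by (subst eval_fabs) (use e1 p1 bv_range[of bsA] in \<open>auto simp: eval_cst\<close>)
    have a2: "eval (\<sigma>(y := h)) (fabs (Phi q i y) (cst bsB)) = \<bar>phi (of_rat q) (\<sigma> i) h - bv bsB\<bar>"
      by (subst eval_fabs) (use e2 p2 bv_range[of bsB] in \<open>auto simp: eval_cst\<close>)
    have b1: "\<bar>phi 1 (\<sigma> j) h - bv bsA\<bar> \<le> 1" using p1 bv_range[of bsA] by (simp add: abs_le_iff)
    have b2: "\<bar>phi (of_rat q) (\<sigma> i) h - bv bsB\<bar> \<le> 1" using p2 bv_range[of bsB] by (simp add: abs_le_iff)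
    show ?thesis by (subst eval_fmax) (use a1 a2 b1 b2 in auto)
  qed
  then show ?thesis unfolding Pform_def by (simp cong: image_cong)
qed


lemma max_shift:
  fixes u v a b a' b' r :: real
  assumes "r \<le> max \<bar>u - a\<bar> \<bar>v - b\<bar>" "\<bar>a' - a\<bar> \<le> r / 4" "\<bar>b' - b\<bar> \<le> r / 4"
  shows "3 * r / 4 \<le> max \<bar>u - a'\<bar> \<bar>v - b'\<bar>"
proof -
  have t1: "\<bar>u - a\<bar> \<le> \<bar>u - a'\<bar> + \<bar>a' - a\<bar>" using abs_triangle_ineq[of "u - a'" "a' - a"] by simp
  have t2: "\<bar>v - b\<bar> \<le> \<bar>v - b'\<bar> + \<bar>b' - b\<bar>" using abs_triangle_ineq[of "v - b'" "b' - b"] by simp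
  from assms(1) have "r \<le> \<bar>u - a\<bar> \<or> r \<le> \<bar>v - b\<bar>" by (simp add: le_max_iff_disj)
  then show ?thesis
  proof
    assume "r \<le> \<bar>u - a\<bar>"
    then have "3 * r / 4 \<le> \<bar>u - a'\<bar>" using t1 assms(2) by linarith
    then show ?thesis by (simp add: le_max_iff_disj)
  next
    assume "r \<le> \<bar>v - b\<bar>"
    then have "3 * r / 4 \<le> \<bar>v - b'\<bar>" using t2 assms(3) by linarith
    then show ?thesis by (simp add: le_max_iff_disj)
  qed
qed

lemma g_lower:
  assumes gi: "gi \<in> Mset" and gj: "gj \<in> Mset" and h: "h \<in> Mset" and s: "s \<in> {0..1}"
    and bq: "0 \<le> \<beta>" "\<beta> \<le> 1"
    and r: "r \<le> gj s - a" "r \<le> b - gi s" "2 * r \<le> (1 - a) - (\<beta> - b)"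
  shows "r \<le> max \<bar>phi 1 gj h - a\<bar> \<bar>phi \<beta> gi h - b\<bar>"
proof -
  obtain t1 where t1: "t1 \<in> {0..1}" "gj t1 + h t1 = 1" using cross_ex[OF gj h, of 1] by auto
  obtain t2 where t2: "t2 \<in> {0..1}" "gi t2 + h t2 = \<beta>" using cross_ex[OF gi h, of \<beta>] bq by auto
  have e: "phi 1 gj h = gj t1" "phi \<beta> gi h = gi t2" using phi_eq[OF gj h t1] phi_eq[OF gi h t2] by auto
  show ?thesis
  proof (rule ccontr)
    assume "\<not> ?thesis"
    then have u: "\<bar>gj t1 - a\<bar> < r" and v: "\<bar>gi t2 - b\<bar> < r" using e by auto
    have "t1 < s"
    proof (rule ccontr)
      assume "\<not> t1 < s"
      then have "gj s \<le> gj t1" using Mset_mono[OF gj s t1(1)] by simp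
      then show False using u r(1) by (simp add: abs_less_iff)
    qed
    moreover have "s < t2"
    proof (rule ccontr)
      assume "\<not> s < t2"
      then have "gi t2 \<le> gi s" using Mset_mono[OF gi t2(1) s] by simp
      then show False using v r(2) by (simp add: abs_less_iff)
    qed
    ultimately have "h t1 \<le> h t2" using Mset_mono[OF h t1(1) t2(1)] by simp
    then show False using t1 t2 u v r(3) by (simp add: abs_less_iff)
  qed
qed

lemma type_imp_sub:
  fixes fs gs :: "(real \<Rightarrow> real) list"
  assumes len: "length fs = n" "length gs = n" and ms: "set fs \<subseteq> Mset" "set gs \<subseteq> Mset"
    and st: "same_type fs gs" and x: "x \<in> im fs"
  shows "x \<in> im gs"
proof (rule ccontr)
  assume notin: "x \<notin> im gs"
  have mf: "\<And>i. i < n \<Longrightarrow> fs!i \<in> Mset" using len(1) ms(1) nth_mem by blast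
  have mg: "\<And>i. i < n \<Longrightarrow> gs!i \<in> Mset" using len(2) ms(2) nth_mem by blast
  obtain t0 where t0: "t0 \<in> {0..1}" "x = map (\<lambda>f. f t0) fs" using x unfolding im_def by auto
  have lx: "length x = n" using t0 len by simp
  have xk: "\<And>k. k < n \<Longrightarrow> x!k = (fs!k) t0" using t0 len by simp
  have pr: "\<And>k. k < n \<Longrightarrow> 0 \<le> x!k \<and> x!k \<le> 1" using xk MsetD(5,6)[OF mf] t0(1) by simp
  obtain i j s where ij: "i < n" "j < n" "s \<in> {0..1}" "(gs!i) s < x!i" "x!j < (gs!j) s"
    using separate[OF len(2) lx ms(2) pr notin] by blast
  define a where "a = x!j"
  define b where "b = x!i"
  have a01: "0 \<le> a" "a \<le> 1" using pr[OF ij(2)] a_def by auto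
  have b01: "0 \<le> b" "b \<le> 1" using pr[OF ij(1)] b_def by auto
  have a1: "a < 1" using ij(5) MsetD(6)[OF mg[OF ij(2)] ij(3)] a_def by simp
  have b0: "0 < b" using ij(4) MsetD(5)[OF mg[OF ij(1)] ij(3)] b_def by simp
  have fa: "(fs!j) t0 = a" and fb: "(fs!i) t0 = b" using xk ij a_def b_def by auto
  have t0p: "0 < t0"
  proof (rule ccontr)
    assume "\<not> 0 < t0" then have "t0 = 0" using t0 by simp
    then show False using fb b0 MsetD(3)[OF mf[OF ij(1)]] by simp
  qed
  have t0l: "t0 < 1"
  proof (rule ccontr)
    assume "\<not> t0 < 1" then have "t0 = 1" using t0 by simp
    then show False using fa a1 MsetD(4)[OF mf[OF ij(2)]] by simp
  qed
  obtain q where q: "0 \<le> q" "q \<le> 1" "b \<le> of_rat q" "of_rat q - b < 1 - a"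
  proof (cases "b = 1")
    case True
    then show ?thesis using that[of 1] a1 by simp
  next
    case False
    then have "b < min 1 (b + (1 - a))" using b01 a1 by simp
    then obtain r where r: "r \<in> \<rat>" "b < r" "r < min 1 (b + (1 - a))" using Rats_dense_in_real by blast
    then obtain q where rq: "r = of_rat q" using Rats_cases by blast
    have "(0::real) < of_rat q" using r rq b0 by linarith
    then have "0 < q" by simp
    then have q0: "0 \<le> q" by simp
    have "(of_rat q::real) \<le> of_rat 1" using r rq by simp
    then have q1: "q \<le> 1" using of_rat_less_eq by blast
    show ?thesis by (rule that[OF q0 q1]) (use r rq in auto)
  qed
  define \<beta> where "\<beta> = (of_rat q::real)"
  have \<beta>01: "0 \<le> \<beta>" "\<beta> \<le> 1" using rat_bounds[OF q(1,2)] \<beta>_def by auto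
  define G where "G = (1 - a) - (\<beta> - b)"
  have G: "0 < G" using q(4) G_def \<beta>_def by simp
  define r where "r = min ((gs!j) s - a) (min (b - (gs!i) s) (G / 2))"
  have r0: "0 < r" unfolding r_def using G ij(4,5) a_def b_def by simp
  have rr: "r \<le> (gs!j) s - a" "r \<le> b - (gs!i) s" "2 * r \<le> G" unfolding r_def by (auto simp: min_def)
  have r40: "0 < r / 4" using r0 by simp
  obtain bsA where bsA: "\<bar>bv bsA - a\<bar> \<le> r / 4" using bv_approx_eps[OF _ r40, of a] a01 by auto
  obtain bsB where bsB: "\<bar>bv bsB - b\<bar> \<le> r / 4" using bv_approx_eps[OF _ r40, of b] b01 by auto
  define P where "P = Pform j i q bsA bsB n"
  have Pl: "in_lang P" unfolding P_def using Pform_lang q by simp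
  have Pfv: "fv P \<subseteq> {..<length fs}" unfolding P_def using Pform_fv[of n i j] ij len by auto
  have eqP: "eval (asg fs) P = eval (asg gs) P" using st Pl Pfv unfolding same_type_def by blast
  have asgf: "asg fs i = fs!i" "asg fs j = fs!j" using ij len by (auto simp: asg_def)
  have asgg: "asg gs i = gs!i" "asg gs j = gs!j" using ij len by (auto simp: asg_def)
  have evf: "eval (asg fs) P = Inf ((\<lambda>h. max \<bar>phi 1 (fs!j) h - bv bsA\<bar> \<bar>phi \<beta> (fs!i) h - bv bsB\<bar>) ` Mset)"
    unfolding P_def \<beta>_def using eval_Pform[of "asg fs" i j n q bsA bsB] asgf mf ij q by simp
  have evg: "eval (asg gs) P = Inf ((\<lambda>h. max \<bar>phi 1 (gs!j) h - bv bsA\<bar> \<bar>phi \<beta> (gs!i) h - bv bsB\<bar>) ` Mset)"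
    unfolding P_def \<beta>_def using eval_Pform[of "asg gs" i j n q bsA bsB] asgg mg ij q by simp
  have low: "3 * r / 4 \<le> eval (asg gs) P"
    unfolding evg
  proof (rule cINF_greatest[OF Mset_ne])
    fix h assume h: "h \<in> Mset"
    have "r \<le> max \<bar>phi 1 (gs!j) h - a\<bar> \<bar>phi \<beta> (gs!i) h - b\<bar>"
      by (rule g_lower[OF mg[OF ij(1)] mg[OF ij(2)] h ij(3) \<beta>01 rr(1,2)]) (use rr(3) G_def in simp)
    then show "3 * r / 4 \<le> max \<bar>phi 1 (gs!j) h - bv bsA\<bar> \<bar>phi \<beta> (gs!i) h - bv bsB\<bar>"
      by (rule max_shift) (use bsA bsB in auto)
  qed
  obtain d where d: "0 < d" "\<forall>t\<in>{0..1}. \<bar>t - t0\<bar> < d \<longrightarrow> \<bar>(fs!j) t - (fs!j) t0\<bar> < min (r / 4) G"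
  proof -
    have "0 < min (r / 4) G" using r0 G by simp
    then show ?thesis using that MsetD(1)[OF mf[OF ij(2)]] t0(1) unfolding continuous_on_iff dist_real_def by blast
  qed
  define t1 where "t1 = t0 + min (d / 2) ((1 - t0) / 2)"
  have t1: "t0 < t1" "t1 < 1" "t1 \<in> {0..1}" "\<bar>t1 - t0\<bar> < d" unfolding t1_def using d(1) t0p t0l by (auto simp: min_def field_simps)
  define c where "c = (fs!j) t1"
  have cb: "\<bar>c - a\<bar> < min (r / 4) G" using d(2) t1 fa c_def by auto
  have ca: "a \<le> c" using Mset_mono[OF mf[OF ij(2)] t0(1) t1(3)] t1(1) fa c_def by simp
  have c1: "c \<le> 1" using MsetD(6)[OF mf[OF ij(2)] t1(3)] c_def by simp
  have v1: "0 \<le> \<beta> - b" using q(3) \<beta>_def by simp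
  have v2: "\<beta> - b \<le> 1 - c" using cb ca G_def by (simp add: abs_less_iff)
  have v3: "1 - c \<le> 1" using ca a01 by simp
  obtain y where y: "y \<in> Mset" "y t0 = \<beta> - b" "y t1 = 1 - c"
    using build_M[OF t0p t1(1) t1(2) v1 v2 v3] by blast
  have py1: "phi 1 (fs!j) y = c" using phi_eq[OF mf[OF ij(2)] y(1) t1(3)] y(3) c_def by simp
  have py2: "phi \<beta> (fs!i) y = b" using phi_eq[OF mf[OF ij(1)] y(1) t0(1)] y(2) fb by simp
  have "eval (asg fs) P \<le> max \<bar>phi 1 (fs!j) y - bv bsA\<bar> \<bar>phi \<beta> (fs!i) y - bv bsB\<bar>"
    unfolding evf by (rule cINF_lower[OF bdd_belowI2[where m=0] y(1)]) simp
  also have "\<dots> \<le> r / 2"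
  proof -
    have "\<bar>c - bv bsA\<bar> \<le> \<bar>c - a\<bar> + \<bar>a - bv bsA\<bar>" using abs_triangle_ineq[of "c - a" "a - bv bsA"] by simp
    moreover have "\<bar>c - a\<bar> < r / 4" using cb by simp
    moreover have "\<bar>a - bv bsA\<bar> \<le> r / 4" using bsA by (simp add: abs_minus_commute)
    moreover have "\<bar>b - bv bsB\<bar> \<le> r / 4" using bsB by (simp add: abs_minus_commute)
    ultimately have "\<bar>c - bv bsA\<bar> \<le> r / 2" "\<bar>b - bv bsB\<bar> \<le> r / 2" by linarith+
    then show ?thesis unfolding py1 py2 by simp
  qed
  finally have "eval (asg fs) P \<le> r / 2" .
  then show False using low eqP r0 by simp
qed


theorem mainTheorem14:
  fixes fs gs :: "(real \<Rightarrow> real) list" and n :: nat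
  assumes "length fs = n" and "length gs = n"
    and "set fs \<subseteq> Mset" and "set gs \<subseteq> Mset"
  shows "same_type fs gs \<longleftrightarrow> im fs = im gs"
proof
  assume st: "same_type fs gs"
  have st': "same_type gs fs" using st unfolding same_type_def by auto
  show "im fs = im gs"
    using type_imp_sub[OF assms(1,2,3,4) st] type_imp_sub[OF assms(2,1,4,3) st'] by blast
next
  assume "im fs = im gs"
  then show "same_type fs gs" by (rule im_imp_same_type[OF assms])
qed

end
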